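(* Let $L$ be a real vector space endowed with a vector preorder $\le$ (a preorder compatible with addition and multiplication by nonnegative scalars), let $C\subset L$ be a linear subspace and $M\subset C$ a nonempty linear subspace such that $C$ is exhaustive (for every $X\in L$ there is $X_0\in C$ with $X_0\ge X$). Let $H\colon C\to\mathbb{R}$ be a convex premium principle, let $L'_+$ be the set of all monotone linear functionals $\mu\colon L\to\mathbb{R}$, and for $\mu\in L'_+$ let $H^*(\mu):=\sup_{X\in C}(\mu(X)-H(X))\in[0,\infty]$. Let $R_{\mathrm{Max}}(X):=\inf\{H(X_0)\mid X_0\in C,\ X_0\ge X\}$ for $X\in L$. Then $$R_{\mathrm{Max}}(X)=\max_{\mu\in L'_+}\big(\mu(X)-H^*(\mu)\big)\quad\text{for all }X\in L,$$ $$H^*(\mu)=\sup_{X\in L}\big(\mu(X)-R_{\mathrm{Max}}(X)\big)\quad\text{for all }\mu\in L'_+,$$ and $H^*(\mu)<\infty$ implies $\mu(m)=H(m)$ for all $m\in M$.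
   Context: A premium principle is a map $H\colon C\to\mathbb{R}$ with (P1') $H(X+m)=H(X)+H(m)$ for all $X\in C$, $m\in M$; (P2') $H(0)=0$ and $H(X)\ge0$ for all $X\in C$ with $X\ge0$; (P3') $\inf\{H(X_0)\mid X_0\in C,\ X_0\ge X\}>-\infty$ for all $X\in L$. Convex means $H(\lambda X+(1-\lambda)Y)\le\lambda H(X)+(1-\lambda)H(Y)$ for $X,Y\in C$, $\lambda\in[0,1]$. A linear functional $\mu$ is monotone if $\mu(X)\le\mu(Y)$ whenever $X\le Y$. *)

theory Defs
  imports "HOL-Analysis.Analysis"
begin

definition vector_preorder :: "('a::real_vector \<Rightarrow> 'a \<Rightarrow> bool) \<Rightarrow> bool" where
  "vector_preorder le \<longleftrightarrow>
     (\<forall>X. le X X) \<and>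
     (\<forall>X Y Z. le X Y \<longrightarrow> le Y Z \<longrightarrow> le X Z) \<and>
     (\<forall>X Y Z. le X Y \<longrightarrow> le (X + Z) (Y + Z)) \<and>
     (\<forall>X Y (c::real). le X Y \<longrightarrow> 0 \<le> c \<longrightarrow> le (c *\<^sub>R X) (c *\<^sub>R Y))"

definition exhaustive :: "('a \<Rightarrow> 'a \<Rightarrow> bool) \<Rightarrow> 'a set \<Rightarrow> bool" where
  "exhaustive le C \<longleftrightarrow> (\<forall>X. \<exists>X0\<in>C. le X X0)"

text \<open>Premium principle H : C \<rightarrow> R (only the values on C matter), axioms (P1')--(P3').\<close>
definition premium_principle ::
  "('a::real_vector \<Rightarrow> 'a \<Rightarrow> bool) \<Rightarrow> 'a set \<Rightarrow> 'a set \<Rightarrow> ('a \<Rightarrow> real) \<Rightarrow> bool" where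
  "premium_principle le C M H \<longleftrightarrow>
     (\<forall>X\<in>C. \<forall>m\<in>M. H (X + m) = H X + H m) \<and>
     H 0 = 0 \<and> (\<forall>X\<in>C. le 0 X \<longrightarrow> 0 \<le> H X) \<and>
     (\<forall>X. bdd_below {H X0 | X0. X0 \<in> C \<and> le X X0})"

definition convex_premium :: "'a::real_vector set \<Rightarrow> ('a \<Rightarrow> real) \<Rightarrow> bool" where
  "convex_premium C H \<longleftrightarrow>
     (\<forall>X\<in>C. \<forall>Y\<in>C. \<forall>t::real. 0 \<le> t \<longrightarrow> t \<le> 1 \<longrightarrow>
        H (t *\<^sub>R X + (1 - t) *\<^sub>R Y) \<le> t * H X + (1 - t) * H Y)"

definition monotone_linear_functionals :: "('a::real_vector \<Rightarrow> 'a \<Rightarrow> bool) \<Rightarrow> ('a \<Rightarrow> real) set" where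
  "monotone_linear_functionals le = {\<mu>. linear \<mu> \<and> (\<forall>X Y. le X Y \<longrightarrow> \<mu> X \<le> \<mu> Y)}"

definition Hstar :: "'a set \<Rightarrow> ('a \<Rightarrow> real) \<Rightarrow> ('a \<Rightarrow> real) \<Rightarrow> ereal" where
  "Hstar C H \<mu> = (SUP X\<in>C. ereal (\<mu> X - H X))"

definition RMax :: "('a \<Rightarrow> 'a \<Rightarrow> bool) \<Rightarrow> 'a set \<Rightarrow> ('a \<Rightarrow> real) \<Rightarrow> 'a \<Rightarrow> real" where
  "RMax le C H X = Inf {H X0 | X0. X0 \<in> C \<and> le X X0}"

end

theory Submission
  imports Defs
begin


definition goodG :: "('a::real_vector \<Rightarrow> real) \<Rightarrow> ('a \<times> real) set \<Rightarrow> bool" where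
 "goodG q G \<longleftrightarrow> subspace G \<and> (\<forall>x a b. (x,a)\<in>G \<longrightarrow> (x,b)\<in>G \<longrightarrow> a=b) \<and> (\<forall>x a. (x,a)\<in>G \<longrightarrow> a \<le> q x)"

lemma key_ineq:
  fixes q :: "'a::real_vector \<Rightarrow> real"
  assumes cvx: "\<And>x y t. 0 \<le> t \<Longrightarrow> t \<le> 1 \<Longrightarrow> q (t *\<^sub>R x + (1 - t) *\<^sub>R y) \<le> t * q x + (1 - t) * q y"
    and G: "goodG q G" and ya: "(y,a)\<in>G" and yb: "(y',b)\<in>G" and s: "s > 0" and t: "t > 0"
  shows "(a - q (y - s *\<^sub>R z)) / s \<le> (q (y' + t *\<^sub>R z) - b) / t"
proof -
  define u where "u = t / (s + t)"
  have u0: "0 \<le> u" "u \<le> 1" using s t by (auto simp: u_def)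
  have 1: "1 - u = s / (s + t)" using s t by (simp add: u_def field_simps)
  have su: "(s + t) * u = t" "(s + t) * (1 - u) = s" using s t by (simp_all add: u_def field_simps)
  have dd: "\<And>A B. (s + t) * (u * A + (1 - u) * B) = ((s + t) * u) * A + ((s + t) * (1 - u)) * B"
    by (simp add: algebra_simps)
    have sub: "subspace G" using G by (simp add: goodG_def)
  have "u *\<^sub>R (y,a) + (1 - u) *\<^sub>R (y',b) \<in> G"
    by (intro subspace_add subspace_scale sub ya yb)
  hence "u * a + (1 - u) * b \<le> q (u *\<^sub>R y + (1 - u) *\<^sub>R y')"
    using G by (auto simp: goodG_def)
  also have "u *\<^sub>R y + (1 - u) *\<^sub>R y' = u *\<^sub>R (y - s *\<^sub>R z) + (1 - u) *\<^sub>R (y' + t *\<^sub>R z)"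
  proof -
    have "u * s = (1 - u) * t" using s t by (simp add: 1 u_def field_simps)
    hence "(u * s) *\<^sub>R z = ((1 - u) * t) *\<^sub>R z" by simp
    thus ?thesis by (simp add: algebra_simps)
  qed
  also have "q \<dots> \<le> u * q (y - s *\<^sub>R z) + (1 - u) * q (y' + t *\<^sub>R z)"
    using cvx u0 by blast
  finally have "(s + t) * (u * a + (1 - u) * b) \<le> (s + t) * (u * q (y - s *\<^sub>R z) + (1 - u) * q (y' + t *\<^sub>R z))"
    using s t by (intro mult_left_mono) auto
  also have "(s + t) * (u * a + (1 - u) * b) = t * a + s * b"
    by (simp only: dd su)
  also have "(s + t) * (u * q (y - s *\<^sub>R z) + (1 - u) * q (y' + t *\<^sub>R z)) = t * q (y - s *\<^sub>R z) + s * q (y' + t *\<^sub>R z)"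
    by (simp only: dd su)
  finally have "t * a + s * b \<le> t * q (y - s *\<^sub>R z) + s * q (y' + t *\<^sub>R z)" .
  thus ?thesis using s t by (simp add: field_simps)
qed

lemma extend:
  fixes q :: "'a::real_vector \<Rightarrow> real"
  assumes cvx: "\<And>x y t. 0 \<le> t \<Longrightarrow> t \<le> 1 \<Longrightarrow> q (t *\<^sub>R x + (1 - t) *\<^sub>R y) \<le> t * q x + (1 - t) * q y"
    and G: "goodG q G" and z: "z \<notin> fst ` G"
  shows "\<exists>G'. goodG q G' \<and> G \<subseteq> G' \<and> G' \<noteq> G"
proof -
  have sub: "subspace G" and fnc: "\<And>x a b. (x,a)\<in>G \<Longrightarrow> (x,b)\<in>G \<Longrightarrow> a=b"
    and dom: "\<And>x a. (x,a)\<in>G \<Longrightarrow> a \<le> q x" using G by (auto simp: goodG_def)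
  have G0: "(0, 0) \<in> G" using subspace_0[OF sub] by (simp add: zero_prod_def)
  define Lo where "Lo = {(a - q (y - s *\<^sub>R z)) / s | y a s. (y,a)\<in>G \<and> s > 0}"
  define c where "c = Sup Lo"
  have "(0 - q (0 - 1 *\<^sub>R z)) / 1 \<in> Lo" unfolding Lo_def using G0 zero_less_one by blast
  hence ne: "Lo \<noteq> {}" by blast
  have bd: "bdd_above Lo"
  proof (rule bdd_aboveI)
    fix x assume "x \<in> Lo"
    then obtain y a s where x: "x = (a - q (y - s *\<^sub>R z)) / s" "(y,a)\<in>G" "s > 0"
      unfolding Lo_def by blast
    have "x \<le> (q (0 + 1 *\<^sub>R z) - 0) / 1"
      unfolding x(1) by (rule key_ineq[OF cvx G x(2) G0 x(3) zero_less_one])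
    thus "x \<le> q z" by simp
  qed
  have cup: "(a - q (y - s *\<^sub>R z)) / s \<le> c" if "(y,a)\<in>G" "s > 0" for y a s
    unfolding c_def by (rule cSup_upper[OF _ bd]) (use that in \<open>auto simp: Lo_def\<close>)
  have clo: "c \<le> (q (y' + t *\<^sub>R z) - b) / t" if "(y',b)\<in>G" "t > 0" for y' b t
    unfolding c_def
  proof (rule cSup_least[OF ne])
    fix x assume "x \<in> Lo"
    then obtain y a s where x: "x = (a - q (y - s *\<^sub>R z)) / s" "(y,a)\<in>G" "s > 0"
      unfolding Lo_def by blast
    show "x \<le> (q (y' + t *\<^sub>R z) - b) / t"
      unfolding x(1) by (rule key_ineq[OF cvx G x(2) that(1) x(3) that(2)])
  qed
  define G' where "G' = {p + t *\<^sub>R (z, c) | p t. p \<in> G}"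
  have sub': "subspace G'"
    unfolding subspace_def
  proof (intro conjI ballI allI)
    have "(0::'a \<times> real) = 0 + 0 *\<^sub>R (z, c)" by (simp add: zero_prod_def)
    thus "0 \<in> G'" unfolding G'_def using subspace_0[OF sub] by blast
  next
    fix x y assume "x \<in> G'" "y \<in> G'"
    then obtain p1 t1 p2 t2 where "x = p1 + t1 *\<^sub>R (z, c)" "p1 \<in> G" "y = p2 + t2 *\<^sub>R (z, c)" "p2 \<in> G"
      unfolding G'_def by blast
    hence "x + y = (p1 + p2) + (t1 + t2) *\<^sub>R (z, c)" "p1 + p2 \<in> G"
      using subspace_add[OF sub] by (auto simp: algebra_simps)
    thus "x + y \<in> G'" unfolding G'_def by blast
  next
    fix r x assume "x \<in> G'"
    then obtain p1 t1 where "x = p1 + t1 *\<^sub>R (z, c)" "p1 \<in> G"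
      unfolding G'_def by blast
    hence "r *\<^sub>R x = r *\<^sub>R p1 + (r * t1) *\<^sub>R (z, c)" "r *\<^sub>R p1 \<in> G"
      using subspace_scale[OF sub] by (auto simp: algebra_simps)
    thus "r *\<^sub>R x \<in> G'" unfolding G'_def by blast
  qed
  have memG': "\<exists>y b t. (x,a) = (y,b) + t *\<^sub>R (z, c) \<and> (y,b) \<in> G" if h: "(x,a)\<in>G'" for x a
  proof -
    obtain p t where "(x,a) = p + t *\<^sub>R (z,c)" "p\<in>G" using h unfolding G'_def by blast
    thus ?thesis by (intro exI[of _ "fst p"] exI[of _ "snd p"] exI[of _ t]) simp
  qed
  have fnc': "a1 = a2" if h: "(x,a1)\<in>G'" "(x,a2)\<in>G'" for x a1 a2
  proof -
    obtain y1 b1 t1 y2 b2 t2 where e1: "(x,a1) = (y1,b1) + t1 *\<^sub>R (z, c)" "(y1,b1) \<in> G"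
      and e2: "(x,a2) = (y2,b2) + t2 *\<^sub>R (z, c)" "(y2,b2) \<in> G"
      using memG'[OF h(1)] memG'[OF h(2)] by blast
    show ?thesis
    proof (cases "t1 = t2")
      case True
      with e1 e2 have "y1 = y2" by simp
      with e1 e2 fnc True show ?thesis by auto
    next
      case False
      have "(1 / (t1 - t2)) *\<^sub>R ((y2,b2) - (y1,b1)) \<in> G"
        by (intro subspace_scale subspace_diff sub e1 e2)
      moreover have "fst ((1 / (t1 - t2)) *\<^sub>R ((y2,b2) - (y1,b1))) = z"
      proof -
        have "y1 + t1 *\<^sub>R z = y2 + t2 *\<^sub>R z" using e1 e2 by simp
        hence "(t1 - t2) *\<^sub>R z = y2 - y1" by (simp add: algebra_simps)
        hence "(1 / (t1 - t2)) *\<^sub>R ((t1 - t2) *\<^sub>R z) = (1 / (t1 - t2)) *\<^sub>R (y2 - y1)" by simp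
        thus ?thesis using False by simp
      qed
      ultimately have "z \<in> fst ` G" by (metis image_eqI)
      with z show ?thesis by simp
    qed
  qed
  have dom': "a \<le> q x" if h: "(x,a)\<in>G'" for x a
  proof -
    obtain y b t where e: "(x,a) = (y,b) + t *\<^sub>R (z, c)" "(y,b) \<in> G"
      using memG'[OF h] by blast
    hence xa: "x = y + t *\<^sub>R z" "a = b + t * c" by auto
    show ?thesis
    proof (cases "t = 0")
      case True thus ?thesis using dom[OF e(2)] xa by simp
    next
      case False
      show ?thesis
      proof (cases "t > 0")
        case True
        from clo[OF e(2) True] True have "t * c \<le> q (y + t *\<^sub>R z) - b"
          by (simp add: field_simps)
        thus ?thesis using xa by simp
      next
        case f2: False
        hence s: "-t > 0" using False by simp
        from cup[OF e(2) s] s have "b - q (y - (-t) *\<^sub>R z) \<le> (-t) * c"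
          by (simp add: field_simps)
        thus ?thesis using xa by simp
      qed
    qed
  qed
  have good': "goodG q G'" using sub' fnc' dom' by (auto simp: goodG_def)
  have "G \<subseteq> G'"
  proof
    fix p assume "p \<in> G"
    moreover have "p = p + 0 *\<^sub>R (z, c)" by (simp add: zero_prod_def)
    ultimately show "p \<in> G'" unfolding G'_def by blast
  qed
  moreover have "(z, c) \<in> G'"
  proof -
    have "(z, c) = (0,0) + 1 *\<^sub>R (z, c)" by simp
    thus ?thesis unfolding G'_def using G0 by blast
  qed
  moreover have "(z, c) \<notin> G" using z by (metis fst_conv image_eqI)
  ultimately show ?thesis using good' by blast
qed

lemma HB_convex:
  fixes q :: "'a::real_vector \<Rightarrow> real"
  assumes cvx: "\<And>x y t. 0 \<le> t \<Longrightarrow> t \<le> 1 \<Longrightarrow> q (t *\<^sub>R x + (1 - t) *\<^sub>R y) \<le> t * q x + (1 - t) * q y"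
    and q0: "q 0 = 0"
  shows "\<exists>l. linear l \<and> (\<forall>x. l x \<le> q x)"
proof -
  define A where "A = {G. goodG q G}"
  have "\<exists>M\<in>A. \<forall>X\<in>A. M \<subseteq> X \<longrightarrow> X = M"
  proof (rule Zorn_Lemma2, intro ballI)
    fix Ch assume ch: "Ch \<in> chains A"
    show "\<exists>U\<in>A. \<forall>X\<in>Ch. X \<subseteq> U"
    proof (cases "Ch = {}")
      case True
      have "goodG q {0}" unfolding goodG_def by (intro conjI subspace_single_0) (auto simp: zero_prod_def q0)
      thus ?thesis using True A_def by blast
    next
      case False
      have gd: "\<And>X. X \<in> Ch \<Longrightarrow> goodG q X" using chainsD2[OF ch] A_def by blast
      have cmp: "\<And>X Y. X \<in> Ch \<Longrightarrow> Y \<in> Ch \<Longrightarrow> X \<subseteq> Y \<or> Y \<subseteq> X" using chainsD[OF ch] by blast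
      have two: "\<exists>Z\<in>Ch. u \<in> Z \<and> v \<in> Z" if "u \<in> \<Union>Ch" "v \<in> \<Union>Ch" for u v
        using that cmp by blast
      have "subspace (\<Union>Ch)"
        unfolding subspace_def
      proof (intro conjI ballI allI)
        obtain X where "X \<in> Ch" using False by blast
        thus "0 \<in> \<Union>Ch" using gd[of X] subspace_0 by (force simp: goodG_def)
      next
        fix u v assume "u \<in> \<Union>Ch" "v \<in> \<Union>Ch"
        then obtain Z where "Z \<in> Ch" "u \<in> Z" "v \<in> Z" using two by blast
        thus "u + v \<in> \<Union>Ch" using gd[of Z] subspace_add by (force simp: goodG_def)
      next
        fix r u assume "u \<in> \<Union>Ch"
        then obtain Z where "Z \<in> Ch" "u \<in> Z" by blast
        thus "r *\<^sub>R u \<in> \<Union>Ch" using gd[of Z] subspace_scale by (force simp: goodG_def)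
      qed
      moreover have "a = b" if h: "(x,a) \<in> \<Union>Ch" "(x,b) \<in> \<Union>Ch" for x a b
      proof -
        obtain Z where "Z \<in> Ch" "(x,a) \<in> Z" "(x,b) \<in> Z" using two[OF h] by blast
        thus ?thesis using gd[of Z] by (auto simp: goodG_def)
      qed
      moreover have "a \<le> q x" if "(x,a) \<in> \<Union>Ch" for x a
        using that gd by (auto simp: goodG_def)
      ultimately have "goodG q (\<Union>Ch)" by (auto simp: goodG_def)
      thus ?thesis using A_def by blast
    qed
  qed
  then obtain M where M: "goodG q M" and mx: "\<And>X. goodG q X \<Longrightarrow> M \<subseteq> X \<Longrightarrow> X = M"
    unfolding A_def by blast
  have sub: "subspace M" and fnc: "\<And>x a b. (x,a)\<in>M \<Longrightarrow> (x,b)\<in>M \<Longrightarrow> a=b"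
    and dom: "\<And>x a. (x,a)\<in>M \<Longrightarrow> a \<le> q x" using M by (auto simp: goodG_def)
  have all: "x \<in> fst ` M" for x
    using extend[OF cvx M, of x] mx by blast
  define l where "l x = (THE a. (x,a) \<in> M)" for x
  have lM: "(x, l x) \<in> M" for x
  proof -
    obtain a where a: "(x,a) \<in> M" using all[of x] by force
    hence "l x = a" unfolding l_def using fnc by blast
    thus ?thesis using a by simp
  qed
  have "linear l"
  proof (rule linearI)
    fix u v
    have "(u, l u) + (v, l v) \<in> M" by (intro subspace_add sub lM)
    hence "(u + v, l u + l v) \<in> M" by simp
    from fnc[OF this lM] show "l (u + v) = l u + l v" by simp
  next
    fix r u
    have "r *\<^sub>R (u, l u) \<in> M" by (intro subspace_scale sub lM)
    hence "(r *\<^sub>R u, r * l u) \<in> M" by simp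
    from fnc[OF this lM] show "l (r *\<^sub>R u) = r *\<^sub>R l u" by simp
  qed
  moreover have "l x \<le> q x" for x using dom lM by blast
  ultimately show ?thesis by blast
qed



lemma nat_mult_bound:
  fixes a h :: real
  assumes "\<And>n::nat. real n * a \<le> h"
  shows "a \<le> 0"
proof (rule ccontr)
  assume "\<not> a \<le> 0"
  hence a: "a > 0" by simp
  obtain n :: nat where "h / a < real n" using reals_Archimedean2 by blast
  hence "h < real n * a" using a by (simp add: field_simps)
  with assms[of n] show False by simp
qed

theorem theorem4p8:
  fixes le :: "'a::real_vector \<Rightarrow> 'a \<Rightarrow> bool"
    and C M :: "'a set"
    and H :: "'a \<Rightarrow> real"
  assumes "vector_preorder le"
    and "subspace C" and "subspace M" and "M \<subseteq> C" and "M \<noteq> {}"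
    and "exhaustive le C"
    and "premium_principle le C M H"
    and "convex_premium C H"
  shows "(\<forall>X. (\<exists>\<mu>\<in>monotone_linear_functionals le.
                 ereal (\<mu> X) - Hstar C H \<mu> = ereal (RMax le C H X)) \<and>
             (\<forall>\<mu>\<in>monotone_linear_functionals le.
                 ereal (\<mu> X) - Hstar C H \<mu> \<le> ereal (RMax le C H X))) \<and>
    (\<forall>\<mu>\<in>monotone_linear_functionals le.
           Hstar C H \<mu> = (SUP X. ereal (\<mu> X) - ereal (RMax le C H X))) \<and>
    (\<forall>\<mu>\<in>monotone_linear_functionals le.
           Hstar C H \<mu> < \<infinity> \<longrightarrow> (\<forall>m\<in>M. \<mu> m = H m))"
proof -
  note vp = assms(1) and subC = assms(2) and subM = assms(3) and MC = assms(4)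
  have refl: "\<And>X. le X X" and trans: "\<And>X Y Z. le X Y \<Longrightarrow> le Y Z \<Longrightarrow> le X Z"
    and addR: "\<And>X Y Z. le X Y \<Longrightarrow> le (X + Z) (Y + Z)"
    and scl: "\<And>X Y c. le X Y \<Longrightarrow> 0 \<le> c \<Longrightarrow> le (c *\<^sub>R X) (c *\<^sub>R Y)"
    using vp unfolding vector_preorder_def by blast+
  have addL: "le (Z + X) (Z + Y)" if "le X Y" for X Y Z
    using addR[OF that, of Z] by (simp add: add.commute)
  have exh: "\<And>X. \<exists>X0\<in>C. le X X0" using assms(6) unfolding exhaustive_def by blast
  have P1: "\<And>X m. X \<in> C \<Longrightarrow> m \<in> M \<Longrightarrow> H (X + m) = H X + H m"
    and H0: "H 0 = 0"
    using assms(7) unfolding premium_principle_def by blast+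
  have bb0: "\<forall>X. bdd_below {H X0 | X0. X0 \<in> C \<and> le X X0}"
    using assms(7) unfolding premium_principle_def by (elim conjE) assumption
  note bb = spec[OF bb0]
  have cvH: "\<And>X Y t. X \<in> C \<Longrightarrow> Y \<in> C \<Longrightarrow> 0 \<le> t \<Longrightarrow> t \<le> 1 \<Longrightarrow>
        H (t *\<^sub>R X + (1 - t) *\<^sub>R Y) \<le> t * H X + (1 - t) * H Y"
    using assms(8) unfolding convex_premium_def by blast
  define R where "R = RMax le C H"
  have Rdef: "R X = Inf {H X0 | X0. X0 \<in> C \<and> le X X0}" for X
    unfolding R_def RMax_def by simp
  have Dne: "{H X0 | X0. X0 \<in> C \<and> le X X0} \<noteq> {}" for X using exh[of X] by blast
  have R_le: "R X \<le> H X0" if "X0 \<in> C" "le X X0" for X X0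
    unfolding Rdef by (rule cInf_lower[OF _ bb]) (use that in blast)
  have R_ge: "b \<le> R X" if "\<And>X0. X0 \<in> C \<Longrightarrow> le X X0 \<Longrightarrow> b \<le> H X0" for X b
    unfolding Rdef by (rule cInf_greatest[OF Dne]) (use that in blast)
  have R_lt: "\<exists>X0\<in>C. le X X0 \<and> H X0 < R X + e" if "e > 0" for X e
  proof (rule ccontr)
    assume "\<not> ?thesis"
    hence "R X + e \<le> R X" by (intro R_ge) force
    with that show False by simp
  qed
  have RH: "R X \<le> H X" if "X \<in> C" for X using R_le[OF that refl] .
  have Rmono: "R X \<le> R Y" if "le X Y" for X Y
    by (rule R_ge) (intro R_le, assumption, rule trans[OF that])
  have Rconv: "R (t *\<^sub>R X + (1 - t) *\<^sub>R Y) \<le> t * R X + (1 - t) * R Y"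
    if t: "0 \<le> t" "t \<le> 1" for X Y t
  proof (rule field_le_epsilon)
    fix e :: real assume e: "e > 0"
    obtain X0 where X0: "X0 \<in> C" "le X X0" "H X0 < R X + e" using R_lt[OF e] by blast
    obtain Y0 where Y0: "Y0 \<in> C" "le Y Y0" "H Y0 < R Y + e" using R_lt[OF e] by blast
    have Z0: "t *\<^sub>R X0 + (1 - t) *\<^sub>R Y0 \<in> C"
      by (intro subspace_add subspace_scale subC X0(1) Y0(1))
    have "le (t *\<^sub>R X + (1 - t) *\<^sub>R Y) (t *\<^sub>R X0 + (1 - t) *\<^sub>R Y)"
      by (rule addR, rule scl[OF X0(2) t(1)])
    moreover have "le (t *\<^sub>R X0 + (1 - t) *\<^sub>R Y) (t *\<^sub>R X0 + (1 - t) *\<^sub>R Y0)"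
      by (rule addL, rule scl[OF Y0(2)]) (use t in simp)
    ultimately have "le (t *\<^sub>R X + (1 - t) *\<^sub>R Y) (t *\<^sub>R X0 + (1 - t) *\<^sub>R Y0)"
      by (rule trans)
    hence "R (t *\<^sub>R X + (1 - t) *\<^sub>R Y) \<le> H (t *\<^sub>R X0 + (1 - t) *\<^sub>R Y0)"
      using R_le[OF Z0] by blast
    also have "\<dots> \<le> t * H X0 + (1 - t) * H Y0" using cvH[OF X0(1) Y0(1) t] .
    also have "\<dots> \<le> t * (R X + e) + (1 - t) * (R Y + e)"
      using X0(3) Y0(3) t by (intro add_mono mult_left_mono) auto
    also have "\<dots> = t * R X + (1 - t) * R Y + e" by (simp add: algebra_simps)
    finally show "R (t *\<^sub>R X + (1 - t) *\<^sub>R Y) \<le> t * R X + (1 - t) * R Y + e" .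
  qed
  have support: "\<exists>l. linear l \<and> (\<forall>Y. l Y \<le> R (X + Y) - R X)" for X
  proof (rule HB_convex)
    fix A B and t :: real assume t: "0 \<le> t" "t \<le> 1"
    have "X + (t *\<^sub>R A + (1 - t) *\<^sub>R B) = t *\<^sub>R (X + A) + (1 - t) *\<^sub>R (X + B)"
      by (simp add: algebra_simps)
    hence "R (X + (t *\<^sub>R A + (1 - t) *\<^sub>R B)) \<le> t * R (X + A) + (1 - t) * R (X + B)"
      using Rconv[OF t] by simp
    thus "R (X + (t *\<^sub>R A + (1 - t) *\<^sub>R B)) - R X \<le> t * (R (X + A) - R X) + (1 - t) * (R (X + B) - R X)"
      by (simp add: algebra_simps)
  qed simp
  have Hs_upper: "ereal (\<mu> Y - H Y) \<le> Hstar C H \<mu>" if "Y \<in> C" for \<mu> Y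
    unfolding Hstar_def by (rule SUP_upper[OF that])
  have Hs0: "0 \<le> Hstar C H \<mu>" if "linear \<mu>" for \<mu>
    using Hs_upper[OF subspace_0[OF subC], of \<mu>] linear_0[OF that] H0 by (simp add: zero_ereal_def)
  have Hs_fin: "\<exists>h. Hstar C H \<mu> = ereal h" if "linear \<mu>" "Hstar C H \<mu> \<noteq> \<infinity>" for \<mu>
    using Hs0[OF that(1)] that(2) by (cases "Hstar C H \<mu>") auto
  have weak: "\<mu> X - h \<le> R X" if mu: "\<mu> \<in> monotone_linear_functionals le" and h: "Hstar C H \<mu> = ereal h" for \<mu> X h
  proof (rule R_ge)
    fix X0 assume X0: "X0 \<in> C" "le X X0"
    have "\<mu> X \<le> \<mu> X0" using mu X0(2) unfolding monotone_linear_functionals_def by blast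
    moreover have "\<mu> X0 - H X0 \<le> h" using Hs_upper[OF X0(1), of \<mu>] h by simp
    ultimately show "\<mu> X - h \<le> H X0" by simp
  qed
  have part1: "(\<exists>\<mu>\<in>monotone_linear_functionals le.
                 ereal (\<mu> X) - Hstar C H \<mu> = ereal (R X)) \<and>
             (\<forall>\<mu>\<in>monotone_linear_functionals le.
                 ereal (\<mu> X) - Hstar C H \<mu> \<le> ereal (R X))" for X
  proof
    obtain l where l: "linear l" "\<And>Y. l Y \<le> R (X + Y) - R X" using support[of X] by blast
    have lmono: "l Y \<le> l Z" if "le Y Z" for Y Z
    proof -
      have "le (Y + (- Z)) (Z + (- Z))" by (rule addR[OF that])
      hence "le (X + (Y - Z)) (X + 0)" by (intro addL) simp
      hence "R (X + (Y - Z)) \<le> R X" using Rmono by simp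
      moreover have "l (Y - Z) \<le> R (X + (Y - Z)) - R X" using l(2) .
      ultimately have "l (Y - Z) \<le> 0" by simp
      thus ?thesis using linear_diff[OF l(1)] by simp
    qed
    have lM: "l \<in> monotone_linear_functionals le"
      unfolding monotone_linear_functionals_def using l(1) lmono by blast
    have "Hstar C H l \<le> ereal (l X - R X)"
      unfolding Hstar_def
    proof (rule SUP_least)
      fix Y assume Y: "Y \<in> C"
      have "l (Y - X) \<le> R (X + (Y - X)) - R X" using l(2) .
      hence "l Y - l X \<le> R Y - R X" using linear_diff[OF l(1)] by simp
      thus "ereal (l Y - H Y) \<le> ereal (l X - R X)" using RH[OF Y] by simp
    qed
    moreover obtain h where h: "Hstar C H l = ereal h"
      using Hs_fin[OF l(1)] calculation by fastforce
    ultimately have "h \<le> l X - R X" by simp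
    moreover have "l X - h \<le> R X" using weak[OF lM h] .
    ultimately have "ereal (l X) - Hstar C H l = ereal (R X)" using h by simp
    thus "\<exists>\<mu>\<in>monotone_linear_functionals le. ereal (\<mu> X) - Hstar C H \<mu> = ereal (R X)"
      using lM by blast
  next
    show "\<forall>\<mu>\<in>monotone_linear_functionals le. ereal (\<mu> X) - Hstar C H \<mu> \<le> ereal (R X)"
    proof
      fix \<mu> assume mu: "\<mu> \<in> monotone_linear_functionals le"
      hence lin: "linear \<mu>" unfolding monotone_linear_functionals_def by blast
      show "ereal (\<mu> X) - Hstar C H \<mu> \<le> ereal (R X)"
      proof (cases "Hstar C H \<mu> = \<infinity>")
        case True thus ?thesis by simp
      next
        case False
        then obtain h where h: "Hstar C H \<mu> = ereal h" using Hs_fin[OF lin] by blast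
        show ?thesis using weak[OF mu h, of X] h by simp
      qed
    qed
  qed
  have part2: "Hstar C H \<mu> = (SUP X. ereal (\<mu> X) - ereal (R X))"
    if mu: "\<mu> \<in> monotone_linear_functionals le" for \<mu>
  proof (rule antisym)
    show "Hstar C H \<mu> \<le> (SUP X. ereal (\<mu> X) - ereal (R X))"
      unfolding Hstar_def
    proof (rule SUP_least)
      fix Y assume Y: "Y \<in> C"
      have "ereal (\<mu> Y - H Y) \<le> ereal (\<mu> Y) - ereal (R Y)" using RH[OF Y] by simp
      also have "\<dots> \<le> (SUP X. ereal (\<mu> X) - ereal (R X))" by (rule SUP_upper) simp
      finally show "ereal (\<mu> Y - H Y) \<le> (SUP X. ereal (\<mu> X) - ereal (R X))" .
    qed
  next
    have lin: "linear \<mu>" using mu unfolding monotone_linear_functionals_def by blast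
    show "(SUP X. ereal (\<mu> X) - ereal (R X)) \<le> Hstar C H \<mu>"
    proof (rule SUP_least)
      fix X
      show "ereal (\<mu> X) - ereal (R X) \<le> Hstar C H \<mu>"
      proof (cases "Hstar C H \<mu> = \<infinity>")
        case True thus ?thesis by simp
      next
        case False
        then obtain h where h: "Hstar C H \<mu> = ereal h" using Hs_fin[OF lin] by blast
        show ?thesis using weak[OF mu h, of X] h by simp
      qed
    qed
  qed
  have HMn: "H (real n *\<^sub>R m) = real n * H m" if m: "m \<in> M" for n m
  proof (induction n)
    case 0 thus ?case using H0 by simp
  next
    case (Suc n)
    have "real (Suc n) *\<^sub>R m = real n *\<^sub>R m + m" by (simp add: algebra_simps)
    moreover have "real n *\<^sub>R m \<in> C" using MC subspace_scale[OF subM m] by blast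
    ultimately have "H (real (Suc n) *\<^sub>R m) = H (real n *\<^sub>R m) + H m" using P1 m by simp
    thus ?case using Suc.IH by (simp add: algebra_simps)
  qed
  have part3: "\<forall>m\<in>M. \<mu> m = H m"
    if mu: "\<mu> \<in> monotone_linear_functionals le" and fin: "Hstar C H \<mu> < \<infinity>" for \<mu>
  proof
    fix m assume m: "m \<in> M"
    have lin: "linear \<mu>" using mu unfolding monotone_linear_functionals_def by blast
    obtain h where h: "Hstar C H \<mu> = ereal h" using Hs_fin[OF lin] fin by fastforce
    have bnd: "real n * (\<mu> x - H x) \<le> h" if x: "x \<in> M" for x n
    proof -
      have "real n *\<^sub>R x \<in> C" using MC subspace_scale[OF subM x] by blast
      from Hs_upper[OF this, of \<mu>] h have "\<mu> (real n *\<^sub>R x) - H (real n *\<^sub>R x) \<le> h" by simp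
      thus ?thesis using HMn[OF x] linear_scale[OF lin] by (simp add: algebra_simps)
    qed
    have "\<mu> m - H m \<le> 0" by (rule nat_mult_bound[OF bnd[OF m]])
    moreover have mm: "- m \<in> M" using subspace_neg[OF subM m] .
    have "H (m + - m) = H m + H (- m)" using P1 m mm MC by blast
    hence Hneg: "H (- m) = - H m" using H0 by simp
    have "\<mu> (- m) - H (- m) \<le> 0" by (rule nat_mult_bound[OF bnd[OF mm]])
    hence "- (\<mu> m - H m) \<le> 0" using Hneg linear_neg[OF lin] by simp
    ultimately show "\<mu> m = H m" by simp
  qed
  show ?thesis using part1 part2 part3 unfolding R_def by blast
qed

end
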